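(* Let $(G,c)\in P_m$ with $G$ connected, and choose a face $f$ of $G$ to be the outer face (so $G$ is viewed as a plane graph). Let $B$ and $W$ denote respectively the number of black and white faces of $G$ other than $f$. Then: - if $f$ is white, $B-W\le \lfloor \frac{m-1}{2}\rfloor$; - if $f$ is black, $B-W\le \lfloor \frac{m-5}{2}\rfloor$.
   Context: $P_m$ is the set of pairs $(G,c)$ where $G$ is a simple graph on $m$ vertices with no isolated vertices, embedded in the $2$-sphere, and $c$ is a coloring of the faces of $G$ in black and white such that every edge bounds exactly one white face and exactly one black face. *)

theory Defs
  imports Main
begin

text \<open>A graph embedded in the 2-sphere is represented combinatorially by a
  rotation system (combinatorial map): a finite set of darts D, a fixed-point-free
  involution alpha on D (pairing the two darts of each edge) and a permutation
  sigma of D (cyclic order of darts around each vertex). The embedding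
  is into the sphere iff the map is connected and V - E + F = 2.\<close>

definition orb :: "('d \<Rightarrow> 'd) \<Rightarrow> 'd \<Rightarrow> 'd set" where
  "orb p d = {(p ^^ n) d | n. True}"

definition vertices_of :: "'d set \<Rightarrow> ('d \<Rightarrow> 'd) \<Rightarrow> 'd set set" where
  "vertices_of D \<sigma> = {orb \<sigma> d | d. d \<in> D}"

definition edges_of :: "'d set \<Rightarrow> ('d \<Rightarrow> 'd) \<Rightarrow> 'd set set" where
  "edges_of D \<alpha> = {orb \<alpha> d | d. d \<in> D}"

definition faces_of :: "'d set \<Rightarrow> ('d \<Rightarrow> 'd) \<Rightarrow> ('d \<Rightarrow> 'd) \<Rightarrow> 'd set set" where
  "faces_of D \<alpha> \<sigma> = {orb (\<sigma> \<circ> \<alpha>) d | d. d \<in> D}"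

definition comb_map :: "'d set \<Rightarrow> ('d \<Rightarrow> 'd) \<Rightarrow> ('d \<Rightarrow> 'd) \<Rightarrow> bool" where
  "comb_map D \<alpha> \<sigma> \<longleftrightarrow> finite D \<and> bij_betw \<sigma> D D \<and>
     (\<forall>d\<in>D. \<alpha> d \<in> D \<and> \<alpha> d \<noteq> d \<and> \<alpha> (\<alpha> d) = d)"

definition map_connected :: "'d set \<Rightarrow> ('d \<Rightarrow> 'd) \<Rightarrow> ('d \<Rightarrow> 'd) \<Rightarrow> bool" where
  "map_connected D \<alpha> \<sigma> \<longleftrightarrow>
     (\<forall>d\<in>D. \<forall>d'\<in>D. (\<lambda>x y. y = \<alpha> x \<or> y = \<sigma> x)\<^sup>*\<^sup>* d d')"

text \<open>Underlying graph is simple: no loops, no multiple edges.\<close>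
definition map_simple :: "'d set \<Rightarrow> ('d \<Rightarrow> 'd) \<Rightarrow> ('d \<Rightarrow> 'd) \<Rightarrow> bool" where
  "map_simple D \<alpha> \<sigma> \<longleftrightarrow>
     (\<forall>d\<in>D. \<alpha> d \<notin> orb \<sigma> d) \<and>
     (\<forall>d\<in>D. \<forall>d'\<in>D. d' \<in> orb \<sigma> d \<and> \<alpha> d' \<in> orb \<sigma> (\<alpha> d) \<longrightarrow> d' = d)"

definition spherical :: "'d set \<Rightarrow> ('d \<Rightarrow> 'd) \<Rightarrow> ('d \<Rightarrow> 'd) \<Rightarrow> bool" where
  "spherical D \<alpha> \<sigma> \<longleftrightarrow>
     int (card (vertices_of D \<sigma>)) - int (card (edges_of D \<alpha>))
       + int (card (faces_of D \<alpha> \<sigma>)) = 2"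

text \<open>Face 2-colouring (True = black, False = white) such that every edge bounds
  exactly one white and one black face: the two sides of the edge {d, alpha d} are
  the faces containing d and alpha d.\<close>
definition proper_face_colouring ::
  "'d set \<Rightarrow> ('d \<Rightarrow> 'd) \<Rightarrow> ('d \<Rightarrow> 'd) \<Rightarrow> ('d set \<Rightarrow> bool) \<Rightarrow> bool" where
  "proper_face_colouring D \<alpha> \<sigma> c \<longleftrightarrow>
     (\<forall>d\<in>D. c (orb (\<sigma> \<circ> \<alpha>) d) \<noteq> c (orb (\<sigma> \<circ> \<alpha>) (\<alpha> d)))"

text \<open>(G,c) in P_m (G given by the combinatorial map (D, alpha, sigma)); 
  no isolated vertices is automatic since vertices are sigma-orbits of darts.\<close>
definition in_P :: "nat \<Rightarrow> 'd set \<Rightarrow> ('d \<Rightarrow> 'd) \<Rightarrow> ('d \<Rightarrow> 'd) \<Rightarrow> ('d set \<Rightarrow> bool) \<Rightarrow> bool" where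
  "in_P m D \<alpha> \<sigma> c \<longleftrightarrow> comb_map D \<alpha> \<sigma> \<and> map_simple D \<alpha> \<sigma> \<and> spherical D \<alpha> \<sigma>
     \<and> card (vertices_of D \<sigma>) = m \<and> proper_face_colouring D \<alpha> \<sigma> c"

end

theory Submission
  imports Defs
begin

lemma funpow_in: "(\<And>x. x\<in>D \<Longrightarrow> p x \<in> D) \<Longrightarrow> d \<in> D \<Longrightarrow> (p^^n) d \<in> D"
  by (induction n) auto

lemma orb_subset:
  assumes a: "\<And>x. x\<in>D \<Longrightarrow> p x \<in> D" and d: "d \<in> D"
  shows "orb p d \<subseteq> D"
proof
  fix y assume y: "y \<in> orb p d"
  then obtain n where "y = (p^^n) d" unfolding orb_def by blast
  then show "y \<in> D" using funpow_in[of D p, OF a d] by simp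
qed

lemma self_in_orb: "d \<in> orb p d"
proof -
  have "d = (p^^0) d" by simp
  then show ?thesis unfolding orb_def by blast
qed

lemma p_in_orb: "p d \<in> orb p d"
proof -
  have "p d = (p^^1) d" by simp
  then show ?thesis unfolding orb_def by blast
qed

lemma orb_trans: "x \<in> orb p d \<Longrightarrow> orb p x \<subseteq> orb p d"
proof
  fix y assume x: "x \<in> orb p d" and y: "y \<in> orb p x"
  obtain k where k: "x = (p^^k) d" using x unfolding orb_def by blast
  obtain n where n: "y = (p^^n) x" using y unfolding orb_def by blast
  have "y = (p^^(n+k)) d" unfolding n k by (simp add: funpow_add)
  then show "y \<in> orb p d" unfolding orb_def by blast
qed

lemma periodic:
  assumes "finite D" "bij_betw p D D" "d \<in> D"
  shows "\<exists>n>0. (p^^n) d = d"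
proof -
  have into: "\<And>x. x \<in> D \<Longrightarrow> p x \<in> D" using assms(2) bij_betwE by blast
  have "\<not> inj_on (\<lambda>k. (p^^k) d) {0..card D}"
  proof
    assume "inj_on (\<lambda>k. (p^^k) d) {0..card D}"
    moreover have "(\<lambda>k. (p^^k) d) ` {0..card D} \<subseteq> D" using funpow_in[OF into assms(3)] by auto
    ultimately have "card {0..card D} \<le> card D" using card_inj_on_le assms(1) by blast
    then show False by simp
  qed
  then obtain a b where ab: "a \<noteq> b" "(p^^a) d = (p^^b) d"
    unfolding inj_on_def by blast
  obtain i j where ij: "i < j" "(p^^i) d = (p^^j) d"
  proof (cases "a < b")
    case True then show ?thesis using that ab by blast
  next
    case False then have "b < a" using ab(1) by simp
    then show ?thesis using that ab by simp
  qed
  have jj: "j = i + (j - i)" using ij(1) by simp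
  have "(p^^j) d = (p^^(i + (j - i))) d" using jj by simp
  also have "\<dots> = (p^^i) ((p^^(j-i)) d)" by (simp add: funpow_add)
  finally have "(p^^j) d = (p^^i) ((p^^(j-i)) d)" .
  moreover have "inj_on (p^^i) D" using bij_betw_funpow[OF assms(2)] bij_betw_def by blast
  moreover have "(p^^(j-i)) d \<in> D" using funpow_in[OF into assms(3)] .
  ultimately have "(p^^(j-i)) d = d" using ij(2) assms(3) by (metis inj_onD)
  then show ?thesis using ij(1) by (intro exI[of _ "j-i"]) auto
qed

lemma funpow_fix_mult: "(p^^n) d = d \<Longrightarrow> (p^^(n*k)) d = d"
  by (induction k) (auto simp: funpow_add)

lemma orb_sym:
  assumes "finite D" "bij_betw p D D" "d \<in> D" "x \<in> orb p d"
  shows "d \<in> orb p x"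
proof -
  obtain k where k: "x = (p^^k) d" using assms(4) unfolding orb_def by blast
  obtain n where n: "n > 0" "(p^^n) d = d" using periodic[OF assms(1-3)] by blast
  have "k \<le> n*k" using n(1) by simp
  then have kk: "n*k = (n*k - k) + k" by simp
  have "(p^^(n*k - k)) x = (p^^((n*k - k) + k)) d" unfolding k by (simp add: funpow_add)
  also have "\<dots> = (p^^(n*k)) d" using kk by simp
  finally have "(p^^(n*k - k)) x = (p^^(n*k)) d" .
  also have "\<dots> = d" using funpow_fix_mult[OF n(2)] .
  finally show ?thesis unfolding orb_def by blast
qed

lemma orb_eq:
  assumes "finite D" "bij_betw p D D" "d \<in> D" "x \<in> orb p d"
  shows "orb p x = orb p d"
proof
  show "orb p x \<subseteq> orb p d" using orb_trans[OF assms(4)] .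
  have "d \<in> orb p x" using orb_sym[OF assms(1,2,3,4)] .
  then show "orb p d \<subseteq> orb p x" by (rule orb_trans)
qed


lemma div2_le: "2 * (x::int) \<le> y \<Longrightarrow> x \<le> y div 2"
  by linarith

lemma arith1: "(b::int) = fb - 1 \<Longrightarrow> w = fw \<Longrightarrow> m - db + fb + fw = 2 \<Longrightarrow> 3*fb \<le> db \<Longrightarrow> 1 \<le> fw \<Longrightarrow> 2*(b - w) \<le> m - 5"
  by presburger

lemma arith2: "(b::int) = fb \<Longrightarrow> w = fw - 1 \<Longrightarrow> m - db + fb + fw = 2 \<Longrightarrow> 3*fb \<le> db \<Longrightarrow> 1 \<le> fw \<Longrightarrow> 2*(b - w) \<le> m - 1"
  by presburger

theorem lemma2p4:
  fixes D :: "'d set" and \<alpha> \<sigma> :: "'d \<Rightarrow> 'd" and c :: "'d set \<Rightarrow> bool"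
    and m :: nat and f :: "'d set"
  assumes "in_P m D \<alpha> \<sigma> c"
    and "map_connected D \<alpha> \<sigma>"
    and "f \<in> faces_of D \<alpha> \<sigma>"
  defines "B \<equiv> card {g \<in> faces_of D \<alpha> \<sigma>. g \<noteq> f \<and> c g}"
    and "W \<equiv> card {g \<in> faces_of D \<alpha> \<sigma>. g \<noteq> f \<and> \<not> c g}"
  shows "(\<not> c f \<longrightarrow> int B - int W \<le> (int m - 1) div 2)
       \<and> (c f \<longrightarrow> int B - int W \<le> (int m - 5) div 2)"
proof -
  define \<phi> where "\<phi> = \<sigma> \<circ> \<alpha>"
  have cm: "comb_map D \<alpha> \<sigma>" and simp: "map_simple D \<alpha> \<sigma>" and sph: "spherical D \<alpha> \<sigma>"
    and Vm: "card (vertices_of D \<sigma>) = m" and col: "proper_face_colouring D \<alpha> \<sigma> c"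
    using assms(1) unfolding in_P_def by auto
  have fin: "finite D" and bs: "bij_betw \<sigma> D D"
    and ap: "\<And>d. d \<in> D \<Longrightarrow> \<alpha> d \<in> D \<and> \<alpha> d \<noteq> d \<and> \<alpha> (\<alpha> d) = d"
    using cm unfolding comb_map_def by auto
  have s1: "\<And>d. d \<in> D \<Longrightarrow> \<alpha> d \<notin> orb \<sigma> d"
    and s2: "\<And>d d'. d \<in> D \<Longrightarrow> d' \<in> D \<Longrightarrow> d' \<in> orb \<sigma> d \<Longrightarrow> \<alpha> d' \<in> orb \<sigma> (\<alpha> d) \<Longrightarrow> d' = d"
    using simp unfolding map_simple_def by auto
  have colour: "\<And>d. d \<in> D \<Longrightarrow> c (orb \<phi> d) \<noteq> c (orb \<phi> (\<alpha> d))"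
    using col unfolding proper_face_colouring_def \<phi>_def by auto
  have ba: "bij_betw \<alpha> D D"
    unfolding bij_betw_def inj_on_def
  proof (intro conjI ballI impI)
    fix x y assume "x \<in> D" "y \<in> D" "\<alpha> x = \<alpha> y" then show "x = y" using ap by metis
  next
    show "\<alpha> ` D = D"
    proof
      show "\<alpha> ` D \<subseteq> D" using ap by auto
      show "D \<subseteq> \<alpha> ` D"
      proof
        fix x assume x: "x \<in> D"
        then have "x = \<alpha> (\<alpha> x)" "\<alpha> x \<in> D" using ap by auto
        then show "x \<in> \<alpha> ` D" by (rule image_eqI)
      qed
    qed
  qed
  have bphi: "bij_betw \<phi> D D" unfolding \<phi>_def using bij_betw_trans[OF ba bs] .
  have intophi: "\<And>x. x \<in> D \<Longrightarrow> \<phi> x \<in> D" using bphi bij_betwE by blast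
  have intos: "\<And>x. x \<in> D \<Longrightarrow> \<sigma> x \<in> D" using bs bij_betwE by blast
  have Fdef: "faces_of D \<alpha> \<sigma> = orb \<phi> ` D" unfolding faces_of_def \<phi>_def by auto
  define F where "F = faces_of D \<alpha> \<sigma>"
  have finF: "finite F" unfolding F_def Fdef using fin by simp
  have orbD: "\<And>d. d \<in> D \<Longrightarrow> orb \<phi> d \<subseteq> D" using orb_subset[of D \<phi>] intophi by blast
  have da: "\<And>x. x \<in> D \<Longrightarrow> \<phi> x \<noteq> x"
  proof
    fix x assume x: "x \<in> D" "\<phi> x = x"
    have "x \<in> orb \<sigma> (\<alpha> x)" using x p_in_orb[of \<sigma> "\<alpha> x"] unfolding \<phi>_def by simp
    then show False using s1[of "\<alpha> x"] ap[OF x(1)] by simp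
  qed
  have db: "\<And>d. d \<in> D \<Longrightarrow> \<phi> (\<phi> d) \<noteq> d"
  proof
    fix d assume d: "d \<in> D" "\<phi> (\<phi> d) = d"
    define e where "e = \<phi> d"
    have eD: "e \<in> D" using intophi d(1) e_def by simp
    have ae: "\<alpha> e \<in> D" using ap eD by blast
    have ad: "\<alpha> d \<in> D" using ap d(1) by blast
    have e1: "e \<in> orb \<sigma> (\<alpha> d)" using p_in_orb[of \<sigma> "\<alpha> d"] unfolding e_def \<phi>_def by simp
    have "d \<in> orb \<sigma> (\<alpha> e)" using p_in_orb[of \<sigma> "\<alpha> e"] d(2) unfolding e_def \<phi>_def by simp
    then have "\<alpha> e \<in> orb \<sigma> d" using orb_sym[OF fin bs ae] by blast
    then have "e = \<alpha> d" using s2[OF ad eD e1] ap[OF d(1)] by simp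
    then have "\<alpha> d \<in> orb \<phi> d" using p_in_orb[of \<phi> d] e_def by simp
    then have "orb \<phi> (\<alpha> d) = orb \<phi> d" using orb_eq[OF fin bphi d(1)] by blast
    then show False using colour[OF d(1)] by simp
  qed
  have card3: "\<And>d. d \<in> D \<Longrightarrow> 3 \<le> card (orb \<phi> d)"
  proof -
    fix d assume d: "d \<in> D"
    have sub: "{d, \<phi> d, \<phi> (\<phi> d)} \<subseteq> orb \<phi> d"
      using self_in_orb[of d \<phi>] p_in_orb[of \<phi> d] orb_trans[of "\<phi> d" \<phi> d] p_in_orb[of \<phi> "\<phi> d"] by blast
    have "card {d, \<phi> d, \<phi> (\<phi> d)} = 3" using da[OF d] da[OF intophi[OF d]] db[OF d] by auto
    moreover have "finite (orb \<phi> d)" using orbD[OF d] fin finite_subset by blast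
    ultimately show "3 \<le> card (orb \<phi> d)" using card_mono[OF _ sub] by simp
  qed
  define Db where "Db = {d \<in> D. c (orb \<phi> d)}"
  define Fb where "Fb = {g \<in> F. c g}"
  define Fw where "Fw = {g \<in> F. \<not> c g}"
  have disj0: "\<And>g h. g \<in> F \<Longrightarrow> h \<in> F \<Longrightarrow> g \<noteq> h \<Longrightarrow> g \<inter> h = {}"
  proof -
    fix g h assume gh: "g \<in> F" "h \<in> F" "g \<noteq> h"
    obtain d e where de: "d \<in> D" "e \<in> D" "g = orb \<phi> d" "h = orb \<phi> e"
      using gh unfolding F_def Fdef by blast
    show "g \<inter> h = {}"
    proof (rule ccontr)
      assume "g \<inter> h \<noteq> {}"
      then obtain x where "x \<in> orb \<phi> d" "x \<in> orb \<phi> e" using de by blast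
      then have "orb \<phi> d = orb \<phi> e" using orb_eq[OF fin bphi] de by metis
      then show False using gh de by simp
    qed
  qed
  have disj: "pairwise disjnt F" unfolding pairwise_def disjnt_def using disj0 by blast
  have FbD: "\<And>g. g \<in> Fb \<Longrightarrow> \<exists>d. d \<in> D \<and> g = orb \<phi> d \<and> c g"
    unfolding Fb_def F_def Fdef by blast
  have UFb: "\<Union> Fb = Db"
  proof
    show "\<Union> Fb \<subseteq> Db"
    proof
      fix x assume "x \<in> \<Union> Fb"
      then obtain g where g: "g \<in> Fb" "x \<in> g" by blast
      obtain d where d: "d \<in> D" "g = orb \<phi> d" "c g" using FbD[OF g(1)] by blast
      have xD: "x \<in> D" using orbD[OF d(1)] g(2) d(2) by blast
      have "orb \<phi> x = orb \<phi> d" using orb_eq[OF fin bphi d(1)] g(2) d(2) by simp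
      then show "x \<in> Db" unfolding Db_def using xD d by simp
    qed
    show "Db \<subseteq> \<Union> Fb"
    proof
      fix x assume x: "x \<in> Db"
      then have "orb \<phi> x \<in> Fb" unfolding Db_def Fb_def F_def Fdef by blast
      moreover have "x \<in> orb \<phi> x" by (rule self_in_orb)
      ultimately show "x \<in> \<Union> Fb" by blast
    qed
  qed
  have pFb: "pairwise disjnt Fb" by (rule pairwise_subset[OF disj]) (auto simp: Fb_def)
  have finm: "\<And>g. g \<in> Fb \<Longrightarrow> finite g"
  proof -
    fix g assume "g \<in> Fb"
    then obtain d where d: "d \<in> D" "g = orb \<phi> d" using FbD by blast
    show "finite g" using finite_subset[OF orbD[OF d(1)] fin] d(2) by simp
  qed
  have "card Db = sum card Fb"
    using card_Union_disjoint[OF pFb finm] UFb by simp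
  moreover have "of_nat (card Fb) * 3 \<le> sum card Fb"
  proof (rule sum_bounded_below)
    fix g assume "g \<in> Fb"
    then obtain d where d: "d \<in> D" "g = orb \<phi> d" using FbD by blast
    show "3 \<le> card g" using card3[OF d(1)] d(2) by simp
  qed
  ultimately have I1: "3 * card Fb \<le> card Db" by simp
  have "bij_betw \<alpha> Db (D - Db)"
    unfolding bij_betw_def
  proof
    have sub: "Db \<subseteq> D" unfolding Db_def by blast
    have "inj_on \<alpha> D" using ba unfolding bij_betw_def by (rule conjunct1)
    then show "inj_on \<alpha> Db" using sub by (rule inj_on_subset)
    show "\<alpha> ` Db = D - Db"
    proof
      show "\<alpha> ` Db \<subseteq> D - Db"
      proof
        fix y assume "y \<in> \<alpha> ` Db"
        then obtain d where d: "d \<in> Db" "y = \<alpha> d" by blast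
        have dD: "d \<in> D" "c (orb \<phi> d)" using d(1) unfolding Db_def by auto
        have "\<alpha> d \<in> D" using ap[OF dD(1)] by simp
        moreover have "\<not> c (orb \<phi> (\<alpha> d))" using colour[OF dD(1)] dD(2) by simp
        ultimately show "y \<in> D - Db" unfolding Db_def using d(2) by simp
      qed
      show "D - Db \<subseteq> \<alpha> ` Db"
      proof
        fix x assume x: "x \<in> D - Db"
        have xD: "x \<in> D" "\<not> c (orb \<phi> x)" using x unfolding Db_def by auto
        have "\<alpha> x \<in> D" "\<alpha> (\<alpha> x) = x" using ap[OF xD(1)] by simp_all
        moreover have "c (orb \<phi> (\<alpha> x))" using colour[OF xD(1)] xD(2) by simp
        ultimately have "\<alpha> x \<in> Db" "x = \<alpha> (\<alpha> x)" unfolding Db_def by simp_all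
        then show "x \<in> \<alpha> ` Db" by (intro image_eqI)
      qed
    qed
  qed
  then have "card Db = card (D - Db)" by (rule bij_betw_same_card)
  moreover have "card D = card Db + card (D - Db)"
  proof -
    have sub: "Db \<subseteq> D" unfolding Db_def by blast
    have "card (D - Db) = card D - card Db" using card_Diff_subset[OF finite_subset[OF sub fin] sub] .
    moreover have "card Db \<le> card D" using card_mono[OF fin sub] .
    ultimately show ?thesis by simp
  qed
  ultimately have cD: "card D = 2 * card Db" by simp
  have orba: "\<And>d. d \<in> D \<Longrightarrow> orb \<alpha> d = {d, \<alpha> d}"
  proof -
    fix d assume d: "d \<in> D"
    have "\<And>n. (\<alpha>^^n) d \<in> {d, \<alpha> d}"
    proof -
      fix n show "(\<alpha>^^n) d \<in> {d, \<alpha> d}" by (induction n) (use ap d in auto)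
    qed
    then show "orb \<alpha> d = {d, \<alpha> d}" using self_in_orb[of d \<alpha>] p_in_orb[of \<alpha> d]
      unfolding orb_def by auto
  qed
  have Edef: "edges_of D \<alpha> = orb \<alpha> ` D" unfolding edges_of_def by blast
  have UE: "\<Union> (edges_of D \<alpha>) = D"
  proof
    show "\<Union> (edges_of D \<alpha>) \<subseteq> D"
    proof
      fix x assume "x \<in> \<Union> (edges_of D \<alpha>)"
      then obtain d where d: "d \<in> D" "x \<in> orb \<alpha> d" unfolding Edef by blast
      then have "x \<in> {d, \<alpha> d}" using orba[OF d(1)] by simp
      then show "x \<in> D" using d(1) ap[OF d(1)] by blast
    qed
    show "D \<subseteq> \<Union> (edges_of D \<alpha>)"
    proof
      fix x assume x: "x \<in> D"
      have "x \<in> orb \<alpha> x" by (rule self_in_orb)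
      moreover have "orb \<alpha> x \<in> edges_of D \<alpha>" unfolding Edef using x by blast
      ultimately show "x \<in> \<Union> (edges_of D \<alpha>)" by blast
    qed
  qed
  have "2 * card (edges_of D \<alpha>) = card (\<Union> (edges_of D \<alpha>))"
  proof (rule card_partition)
    show "finite (edges_of D \<alpha>)" unfolding Edef using fin by (rule finite_imageI)
    show "finite (\<Union> (edges_of D \<alpha>))" unfolding UE by (rule fin)
    show "\<And>e. e \<in> edges_of D \<alpha> \<Longrightarrow> card e = 2"
    proof -
      fix e assume "e \<in> edges_of D \<alpha>"
      then obtain d where d: "d \<in> D" "e = orb \<alpha> d" unfolding Edef by blast
      have "\<alpha> d \<noteq> d" using ap[OF d(1)] by simp
      then show "card e = 2" using orba[OF d(1)] d(2) by simp
    qed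
    show "\<And>c1 c2. c1 \<in> edges_of D \<alpha> \<Longrightarrow> c2 \<in> edges_of D \<alpha> \<Longrightarrow> c1 \<noteq> c2 \<Longrightarrow> c1 \<inter> c2 = {}"
    proof -
      fix c1 c2 assume h: "c1 \<in> edges_of D \<alpha>" "c2 \<in> edges_of D \<alpha>" "c1 \<noteq> c2"
      obtain d e where de: "d \<in> D" "e \<in> D" "c1 = orb \<alpha> d" "c2 = orb \<alpha> e"
        using h(1,2) unfolding Edef by blast
      show "c1 \<inter> c2 = {}"
      proof (rule ccontr)
        assume "c1 \<inter> c2 \<noteq> {}"
        then obtain x where x: "x \<in> orb \<alpha> d" "x \<in> orb \<alpha> e" using de by blast
        have "orb \<alpha> x = orb \<alpha> d" using orb_eq[OF fin ba de(1) x(1)] .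
        moreover have "orb \<alpha> x = orb \<alpha> e" using orb_eq[OF fin ba de(2) x(2)] .
        ultimately show False using h(3) de by simp
      qed
    qed
  qed
  moreover note UE
  ultimately have cE: "card (edges_of D \<alpha>) = card Db" using cD by simp
  obtain d0 where d0: "d0 \<in> D" using assms(3) unfolding faces_of_def by auto
  have "Fw \<noteq> {}"
  proof (cases "c (orb \<phi> d0)")
    case True
    then have "orb \<phi> (\<alpha> d0) \<in> Fw" using colour[OF d0] ap[OF d0] unfolding Fw_def F_def Fdef by auto
    then show ?thesis by blast
  next
    case False
    then have "orb \<phi> d0 \<in> Fw" using d0 unfolding Fw_def F_def Fdef by auto
    then show ?thesis by blast
  qed
  then have Fw1: "1 \<le> card Fw" using finF unfolding Fw_def by (simp add: Suc_leI card_gt_0_iff)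
  have cF: "card F = card Fb + card Fw"
  proof -
    have "F = Fb \<union> Fw" "Fb \<inter> Fw = {}" unfolding Fb_def Fw_def by auto
    then show ?thesis using finF card_Un_disjoint[of Fb Fw] by (simp add: Fb_def Fw_def)
  qed
  have eul: "int m - int (card Db) + int (card Fb) + int (card Fw) = 2"
    using sph Vm cE cF unfolding spherical_def F_def by simp
  have Bd: "B = card (Fb - {f})" unfolding B_def Fb_def F_def by (rule arg_cong[where f=card]) auto
  have Wd: "W = card (Fw - {f})" unfolding W_def Fw_def F_def by (rule arg_cong[where f=card]) auto
  have fF: "f \<in> F" using assms(3) F_def by simp
  have I1i: "3 * int (card Fb) \<le> int (card Db)" using I1 by linarith
  have Fw1i: "1 \<le> int (card Fw)" using Fw1 by linarith
  have finFb: "finite Fb" "finite Fw" using finF unfolding Fb_def Fw_def by auto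
  show ?thesis
  proof (cases "c f")
    case True
    then have "f \<in> Fb" "f \<notin> Fw" using fF unfolding Fb_def Fw_def by auto
    then have "B = card Fb - 1" "W = card Fw" "card Fb \<ge> 1" unfolding Bd Wd using finFb
      by (auto simp: card_gt_0_iff Suc_le_eq)
    then have "int B = int (card Fb) - 1" "int W = int (card Fw)" by auto
    then have "2 * (int B - int W) \<le> int m - 5" using arith1 eul I1i Fw1i by blast
    then show ?thesis using True div2_le by blast
  next
    case False
    then have "f \<notin> Fb" "f \<in> Fw" using fF unfolding Fb_def Fw_def by auto
    then have "B = card Fb" "W = card Fw - 1" unfolding Bd Wd using finFb by auto
    then have "int B = int (card Fb)" "int W = int (card Fw) - 1" using Fw1 by auto
    then have "2 * (int B - int W) \<le> int m - 1" using arith2 eul I1i Fw1i by blast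
    then show ?thesis using False div2_le by blast
  qed
qed

end
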